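(* Let $C_1,C_2$ be $d$-copulas admitting tail dependence functions with $C_1<_{TD}C_2$. Let $S\subset(0,\infty)^d$ be a cone (i.e. $\boldsymbol w\in S$ implies $\lambda\boldsymbol w\in S$ for all $\lambda>0$) such that $S\cup\{\boldsymbol 0\}$ is closed in $[0,\infty)^d$. Then there exists $\varepsilon>0$ such that $C_1(\boldsymbol u)\le C_2(\boldsymbol u)$ for all $\boldsymbol u\in S\cap B_\varepsilon(\boldsymbol 0)\cap[0,1]^d$.
   Context: A $d$-copula is a grounded, $d$-increasing function $C:[0,1]^d\to[0,1]$ with uniform margins. Its tail dependence function is $\Lambda(\boldsymbol w;C)=\lim_{s\searrow0}C(s\boldsymbol w)/s$ for $\boldsymbol w\in[0,\infty)^d$, assumed to exist for all $\boldsymbol w$. $C_1<_{TD}C_2$ means $\Lambda(\boldsymbol w;C_1)<\Lambda(\boldsymbol w;C_2)$ for all $\boldsymbol w\in(0,\infty)^d$. $B_\varepsilon(\boldsymbol 0)$ is the open Euclidean ball of radius $\varepsilon$ centred at $\boldsymbol 0$. *)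

theory Defs
  imports "HOL-Analysis.Analysis"
begin

definition unit_cube :: "(real^'d) set" where
  "unit_cube = {u. \<forall>i. 0 \<le> u$i \<and> u$i \<le> 1}"

definition nonneg_orthant :: "(real^'d) set" where
  "nonneg_orthant = {u. \<forall>i. 0 \<le> u$i}"

definition pos_orthant :: "(real^'d) set" where
  "pos_orthant = {u. \<forall>i. 0 < u$i}"

definition C_volume :: "(real^'d \<Rightarrow> real) \<Rightarrow> real^'d \<Rightarrow> real^'d \<Rightarrow> real" where
  "C_volume C a b =
     (\<Sum>J\<in>Pow (UNIV::'d set). (-1) ^ card J * C (\<chi> i. if i \<in> J then a$i else b$i))"

definition copula :: "(real^'d::finite \<Rightarrow> real) \<Rightarrow> bool" where
  "copula C \<longleftrightarrow>
     (\<forall>u\<in>unit_cube. 0 \<le> C u \<and> C u \<le> 1) \<and>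
     (\<forall>u\<in>unit_cube. (\<exists>i. u$i = 0) \<longrightarrow> C u = 0) \<and>
     (\<forall>u\<in>unit_cube. \<forall>i. (\<forall>j. j \<noteq> i \<longrightarrow> u$j = 1) \<longrightarrow> C u = u$i) \<and>
     (\<forall>a\<in>unit_cube. \<forall>b\<in>unit_cube. (\<forall>i. a$i \<le> b$i) \<longrightarrow> 0 \<le> C_volume C a b)"

definition tail_dep :: "(real^'d \<Rightarrow> real) \<Rightarrow> real^'d \<Rightarrow> real" where
  "tail_dep C w = Lim (at_right 0) (\<lambda>s. C (s *\<^sub>R w) / s)"

definition admits_tail_dep :: "(real^'d \<Rightarrow> real) \<Rightarrow> bool" where
  "admits_tail_dep C \<longleftrightarrow>
     (\<forall>w\<in>nonneg_orthant. (\<exists>L. ((\<lambda>s. C (s *\<^sub>R w) / s) \<longlongrightarrow> L) (at_right 0)))"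

definition TD_less :: "(real^'d \<Rightarrow> real) \<Rightarrow> (real^'d \<Rightarrow> real) \<Rightarrow> bool" where
  "TD_less C1 C2 \<longleftrightarrow> (\<forall>w\<in>pos_orthant. tail_dep C1 w < tail_dep C2 w)"

end

theory Submission
  imports Defs
begin

definition upd :: "real^'d \<Rightarrow> 'd \<Rightarrow> real \<Rightarrow> real^'d" where
  "upd x i t = (\<chi> k. if k = i then t else x$k)"

lemma upd_nth[simp]: "upd x i t $ k = (if k = i then t else x$k)"
  by (simp add: upd_def)

lemma upd_cube: "x \<in> unit_cube \<Longrightarrow> 0 \<le> t \<Longrightarrow> t \<le> 1 \<Longrightarrow> upd x i t \<in> unit_cube"
  by (simp add: unit_cube_def)

lemma vol_reduce:
  fixes C :: "real^'d::finite \<Rightarrow> real"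
  assumes "copula C" "a \<in> unit_cube" "b \<in> unit_cube" "\<forall>k. k \<notin> I \<longrightarrow> a$k = 0"
  shows "C_volume C a b = (\<Sum>J\<in>Pow I. (-1) ^ card J * C (\<chi> i. if i \<in> J then a$i else b$i))"
  unfolding C_volume_def
proof (rule sum.mono_neutral_right)
  show "\<forall>J\<in>Pow UNIV - Pow I. (-1) ^ card J * C (\<chi> i. if i \<in> J then a$i else b$i) = 0"
  proof
    fix J assume "J \<in> Pow UNIV - Pow I"
    then obtain k where k: "k \<in> J" "k \<notin> I" by auto
    have cube: "(\<chi> i. if i \<in> J then a$i else b$i) \<in> unit_cube"
      using assms(2,3) by (simp add: unit_cube_def)
    have "(\<chi> i. if i \<in> J then a$i else b$i) $ k = 0" using k assms(4) by simp
    hence "C (\<chi> i. if i \<in> J then a$i else b$i) = 0"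
      using assms(1) cube unfolding copula_def by blast
    thus "(-1) ^ card J * C (\<chi> i. if i \<in> J then a$i else b$i) = 0" by simp
  qed
qed auto

lemma mono1:
  fixes C :: "real^'d::finite \<Rightarrow> real"
  assumes "copula C" "x \<in> unit_cube" "0 \<le> s" "s \<le> t" "t \<le> 1"
  shows "C (upd x i s) \<le> C (upd x i t)"
proof -
  define a :: "real^'d" where "a = (\<chi> k. if k = i then s else 0)"
  define b where "b = upd x i t"
  have ac: "a \<in> unit_cube" using assms by (simp add: a_def unit_cube_def)
  have bc: "b \<in> unit_cube" using assms by (simp add: b_def upd_cube)
  have le: "\<forall>k. a$k \<le> b$k" using assms(2,3,4) by (simp add: a_def b_def unit_cube_def)
  have "0 \<le> C_volume C a b" using assms(1) ac bc le unfolding copula_def by blast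
  also have "C_volume C a b = (\<Sum>J\<in>Pow {i}. (-1) ^ card J * C (\<chi> k. if k \<in> J then a$k else b$k))"
    by (rule vol_reduce[OF assms(1) ac bc]) (simp add: a_def)
  also have "\<dots> = C b - C (\<chi> k. if k = i then a$k else b$k)"
    by (simp add: Pow_insert)
  also have "(\<chi> k. if k = i then a$k else b$k) = upd x i s"
    by (simp add: vec_eq_iff a_def b_def)
  finally show ?thesis by (simp add: b_def)
qed

lemma mono2:
  fixes C :: "real^'d::finite \<Rightarrow> real"
  assumes "copula C" "y \<in> unit_cube" "0 \<le> s" "s \<le> t" "t \<le> 1" "j \<noteq> i"
  shows "C (upd y i t) - C (upd y i s) \<le> C (upd (upd y j 1) i t) - C (upd (upd y j 1) i s)"
proof -
  define a :: "real^'d" where "a = (\<chi> k. if k = i then s else if k = j then y$j else 0)"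
  define b :: "real^'d" where "b = (\<chi> k. if k = i then t else if k = j then 1 else y$k)"
  have ac: "a \<in> unit_cube" using assms by (simp add: a_def unit_cube_def)
  have bc: "b \<in> unit_cube" using assms by (simp add: b_def unit_cube_def)
  have le: "\<forall>k. a$k \<le> b$k" using assms(2,3,4) by (simp add: a_def b_def unit_cube_def)
  have "0 \<le> C_volume C a b" using assms(1) ac bc le unfolding copula_def by blast
  also have "C_volume C a b = (\<Sum>J\<in>Pow {i,j}. (-1) ^ card J * C (\<chi> k. if k \<in> J then a$k else b$k))"
    by (rule vol_reduce[OF assms(1) ac bc]) (simp add: a_def)
  also have "Pow {i,j} = {{}, {i}, {j}, {i,j}}" by (auto simp: Pow_insert)
  also have "(\<Sum>J\<in>{{}, {i}, {j}, {i,j}}. (-1) ^ card J * C (\<chi> k. if k \<in> J then a$k else b$k))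
      = C (\<chi> k. if k \<in> {} then a$k else b$k) - C (\<chi> k. if k \<in> {i} then a$k else b$k)
        - C (\<chi> k. if k \<in> {j} then a$k else b$k) + C (\<chi> k. if k \<in> {i,j} then a$k else b$k)"
    using assms(6) by (simp add: insert_commute)
  also have "(\<chi> k. if k \<in> {} then a$k else b$k) = upd (upd y j 1) i t"
    using assms(6) by (simp add: vec_eq_iff a_def b_def)
  also have "(\<chi> k. if k \<in> {i} then a$k else b$k) = upd (upd y j 1) i s"
    using assms(6) by (simp add: vec_eq_iff a_def b_def)
  also have "(\<chi> k. if k \<in> {j} then a$k else b$k) = upd y i t"
    using assms(6) by (simp add: vec_eq_iff a_def b_def)
  also have "(\<chi> k. if k \<in> {i,j} then a$k else b$k) = upd y i s"
    using assms(6) by (simp add: vec_eq_iff a_def b_def)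
  finally show ?thesis by simp
qed

lemma upper1:
  fixes C :: "real^'d::finite \<Rightarrow> real"
  assumes "copula C" "x \<in> unit_cube" "0 \<le> s" "s \<le> t" "t \<le> 1"
  shows "C (upd x i t) - C (upd x i s) \<le> t - s"
proof -
  define D where "D y = C (upd y i t) - C (upd y i s)" for y
  define Y where "Y A = (\<chi> k. if k \<in> A then 1 else x$k)" for A :: "'d set"
  have Yc: "Y A \<in> unit_cube" for A using assms(2) by (simp add: Y_def unit_cube_def)
  have "D x \<le> D (Y A)" for A
  proof (induction A rule: infinite_finite_induct)
    case (infinite A) then show ?case by simp
  next
    case empty
    have "Y {} = x" by (simp add: Y_def vec_eq_iff)
    then show ?case by simp
  next
    case (insert j A)
    have eq: "Y (insert j A) = upd (Y A) j 1" by (simp add: Y_def vec_eq_iff)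
    show ?case
    proof (cases "j = i")
      case True
      have "upd (upd (Y A) j 1) i r = upd (Y A) i r" for r using True by (simp add: vec_eq_iff)
      then show ?thesis using insert eq by (simp add: D_def)
    next
      case False
      have "D (Y A) \<le> D (Y (insert j A))"
        unfolding eq D_def by (rule mono2[OF assms(1) Yc assms(3,4,5) False])
      then show ?thesis using insert by simp
    qed
  qed
  hence "D x \<le> D (Y UNIV)" .
  moreover have "C (upd (Y UNIV) i r) = r" if "0 \<le> r" "r \<le> 1" for r
  proof -
    have "upd (Y UNIV) i r \<in> unit_cube" using Yc that by (simp add: upd_cube)
    moreover have "\<forall>j. j \<noteq> i \<longrightarrow> upd (Y UNIV) i r $ j = 1" by (simp add: Y_def)
    ultimately have "C (upd (Y UNIV) i r) = upd (Y UNIV) i r $ i"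
      using assms(1) unfolding copula_def by blast
    thus ?thesis by simp
  qed
  ultimately show ?thesis using assms by (simp add: D_def)
qed

lemma lip1:
  fixes C :: "real^'d::finite \<Rightarrow> real"
  assumes "copula C" "x \<in> unit_cube" "0 \<le> t" "t \<le> 1"
  shows "\<bar>C (upd x i t) - C x\<bar> \<le> \<bar>t - x$i\<bar>"
proof -
  have x: "x = upd x i (x$i)" by (simp add: vec_eq_iff)
  have xi: "0 \<le> x$i" "x$i \<le> 1" using assms(2) by (auto simp: unit_cube_def)
  show ?thesis
  proof (cases "x$i \<le> t")
    case True
    have "C (upd x i (x$i)) \<le> C (upd x i t)" by (rule mono1) (use assms xi True in auto)
    moreover have "C (upd x i t) - C (upd x i (x$i)) \<le> t - x$i" by (rule upper1) (use assms xi True in auto)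
    ultimately show ?thesis using True by (subst (1 2) x) auto
  next
    case False
    have "C (upd x i t) \<le> C (upd x i (x$i))" by (rule mono1) (use assms xi False in auto)
    moreover have "C (upd x i (x$i)) - C (upd x i t) \<le> x$i - t" by (rule upper1) (use assms xi False in auto)
    ultimately show ?thesis using False by (subst (1 2) x) auto
  qed
qed

lemma lip:
  fixes C :: "real^'d::finite \<Rightarrow> real"
  assumes "copula C" "u \<in> unit_cube" "v \<in> unit_cube"
  shows "\<bar>C u - C v\<bar> \<le> real CARD('d) * norm (u - v)"
proof -
  define Z where "Z A = (\<chi> k. if k \<in> A then v$k else u$k)" for A :: "'d set"
  have Zc: "Z A \<in> unit_cube" for A using assms(2,3) by (simp add: Z_def unit_cube_def)
  have "\<bar>C (Z A) - C u\<bar> \<le> (\<Sum>i\<in>A. \<bar>u$i - v$i\<bar>)" for A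
  proof (induction A rule: infinite_finite_induct)
    case (infinite A) then show ?case by simp
  next
    case empty
    have "Z {} = u" by (simp add: Z_def vec_eq_iff)
    then show ?case by simp
  next
    case (insert j A)
    have eq: "Z (insert j A) = upd (Z A) j (v$j)" by (simp add: Z_def vec_eq_iff)
    have zj: "Z A $ j = u$j" using insert by (simp add: Z_def)
    have "\<bar>C (upd (Z A) j (v$j)) - C (Z A)\<bar> \<le> \<bar>v$j - Z A $ j\<bar>"
      by (rule lip1[OF assms(1) Zc]) (use assms(3) in \<open>auto simp: unit_cube_def\<close>)
    then show ?case using insert eq zj by (simp add: abs_minus_commute)
  qed
  from this[of UNIV] have "\<bar>C v - C u\<bar> \<le> (\<Sum>i\<in>UNIV. \<bar>u$i - v$i\<bar>)"
    by (simp add: Z_def)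
  also have "\<dots> \<le> (\<Sum>i\<in>(UNIV::'d set). norm (u - v))"
    using component_le_norm_cart[of "u - v"] by (intro sum_mono) simp
  also have "\<dots> = real CARD('d) * norm (u - v)" by simp
  finally show ?thesis by (simp add: abs_minus_commute)
qed

lemma scaled_cube:
  fixes w :: "real^'d::finite"
  assumes "w \<in> pos_orthant" "norm w = 1" "0 < s" "s < 1"
  shows "s *\<^sub>R w \<in> unit_cube"
proof -
  have "0 < w$i" "w$i \<le> 1" for i
    using assms(1) component_le_norm_cart[of w i] assms(2) by (auto simp: pos_orthant_def)
  then show ?thesis using assms(3,4)
    by (auto simp: unit_cube_def less_imp_le intro!: mult_le_one)
qed

lemma local_step:
  fixes C1 C2 :: "real^'d::finite \<Rightarrow> real" and K :: "(real^'d) set"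
  assumes c1: "copula C1" and c2: "copula C2"
    and a1: "admits_tail_dep C1" and a2: "admits_tail_dep C2"
    and td: "TD_less C1 C2"
    and K: "K \<subseteq> pos_orthant" "\<forall>w\<in>K. norm w = 1"
    and w0: "w0 \<in> K"
  shows "\<exists>r>0. eventually (\<lambda>s. \<forall>w\<in>K \<inter> ball w0 r. C1 (s *\<^sub>R w) \<le> C2 (s *\<^sub>R w)) (at_right 0)"
proof -
  define M where "M = real CARD('d)"
  have M: "M \<ge> 1" unfolding M_def using finite_UNIV_card_ge_0[where 'a='d] by simp
  have wp: "w0 \<in> pos_orthant" using K w0 by auto
  hence wn: "w0 \<in> nonneg_orthant" by (auto simp: pos_orthant_def nonneg_orthant_def less_imp_le)
  obtain L1 where L1: "((\<lambda>s. C1 (s *\<^sub>R w0) / s) \<longlongrightarrow> L1) (at_right 0)"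
    using a1 wn unfolding admits_tail_dep_def by blast
  obtain L2 where L2: "((\<lambda>s. C2 (s *\<^sub>R w0) / s) \<longlongrightarrow> L2) (at_right 0)"
    using a2 wn unfolding admits_tail_dep_def by blast
  have "tail_dep C1 w0 = L1" "tail_dep C2 w0 = L2"
    unfolding tail_dep_def using L1 L2 by (auto intro!: tendsto_Lim)
  hence g: "L2 - L1 > 0" using td wp unfolding TD_less_def by auto
  define g where "g = L2 - L1"
  have lim: "((\<lambda>s. C2 (s *\<^sub>R w0) / s - C1 (s *\<^sub>R w0) / s) \<longlongrightarrow> g) (at_right 0)"
    unfolding g_def by (intro tendsto_diff L1 L2)
  have ev1: "eventually (\<lambda>s. C2 (s *\<^sub>R w0) / s - C1 (s *\<^sub>R w0) / s > g/2) (at_right 0)"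
    using order_tendstoD(1)[OF lim, of "g/2"] g g_def by simp
  have ev2: "eventually (\<lambda>s. s < (1::real)) (at_right 0)"
    unfolding eventually_at_right_field by (intro exI[of _ 1]) auto
  define r where "r = g / (4 * M)"
  have r: "r > 0" using g M by (simp add: r_def g_def)
  show ?thesis
  proof (intro exI[of _ r] conjI r)
    show "eventually (\<lambda>s. \<forall>w\<in>K \<inter> ball w0 r. C1 (s *\<^sub>R w) \<le> C2 (s *\<^sub>R w)) (at_right 0)"
      using ev1 ev2 eventually_at_right_less[of "0::real"]
    proof eventually_elim
      case (elim s)
      show ?case
      proof
        fix w assume w: "w \<in> K \<inter> ball w0 r"
        have wc: "s *\<^sub>R w \<in> unit_cube" using w K elim by (intro scaled_cube) auto
        have w0c: "s *\<^sub>R w0 \<in> unit_cube" using w0 K elim by (intro scaled_cube) auto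
        have nd: "norm (s *\<^sub>R w - s *\<^sub>R w0) = s * dist w0 w"
          using elim by (simp add: scaleR_right_diff_distrib[symmetric] dist_norm norm_minus_commute)
        have d: "dist w0 w < r" using w by auto
        have "M * (s * dist w0 w) \<le> M * (s * r)"
          using d elim M by (intro mult_left_mono) auto
        also have "M * (s * r) = s * g / 4" using M by (simp add: r_def)
        finally have bnd: "M * norm (s *\<^sub>R w - s *\<^sub>R w0) \<le> s * g / 4" using nd by simp
        have l1: "\<bar>C1 (s *\<^sub>R w) - C1 (s *\<^sub>R w0)\<bar> \<le> M * norm (s *\<^sub>R w - s *\<^sub>R w0)"
          unfolding M_def by (rule lip[OF c1 wc w0c])
        have l2: "\<bar>C2 (s *\<^sub>R w) - C2 (s *\<^sub>R w0)\<bar> \<le> M * norm (s *\<^sub>R w - s *\<^sub>R w0)"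
          unfolding M_def by (rule lip[OF c2 wc w0c])
        have "s * (g/2) < s * (C2 (s *\<^sub>R w0) / s - C1 (s *\<^sub>R w0) / s)"
          using elim by (intro mult_strict_left_mono) auto
        also have "\<dots> = C2 (s *\<^sub>R w0) - C1 (s *\<^sub>R w0)" using elim by (simp add: field_simps)
        finally have "s * g / 2 < C2 (s *\<^sub>R w0) - C1 (s *\<^sub>R w0)" by simp
        with l1 l2 bnd show "C1 (s *\<^sub>R w) \<le> C2 (s *\<^sub>R w)" by linarith
      qed
    qed
  qed
qed

theorem mainTheorem5:
  fixes C1 C2 :: "real^'d::finite \<Rightarrow> real" and S :: "(real^'d) set"
  assumes "copula C1" and "copula C2"
    and "admits_tail_dep C1" and "admits_tail_dep C2"
    and "TD_less C1 C2"
    and "S \<subseteq> pos_orthant"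
    and "\<forall>w\<in>S. \<forall>c>(0::real). c *\<^sub>R w \<in> S"
    and "closedin (top_of_set nonneg_orthant) (insert 0 S)"
  shows "\<exists>\<epsilon>>0. \<forall>u \<in> S \<inter> ball 0 \<epsilon> \<inter> unit_cube. C1 u \<le> C2 u"
proof -
  define K where "K = S \<inter> sphere 0 1"
  have cno: "closed (nonneg_orthant :: (real^'d) set)"
  proof -
    have "(nonneg_orthant :: (real^'d) set) = (\<Inter>i. {u. 0 \<le> u$i})"
      by (auto simp: nonneg_orthant_def)
    also have "closed \<dots>" by (intro closed_INT ballI closed_halfspace_component_ge_cart)
    finally show ?thesis .
  qed
  obtain T where T: "closed T" "insert 0 S = T \<inter> nonneg_orthant"
    using assms(8) unfolding closedin_closed by blast
  have "closed (insert 0 S)" using T cno by auto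
  moreover have "K = insert 0 S \<inter> sphere 0 1" by (auto simp: K_def)
  ultimately have cK: "compact K"
    by (simp only:) (rule closed_Int_compact, assumption, rule compact_sphere)
  have Kp: "K \<subseteq> pos_orthant" "\<forall>w\<in>K. norm w = 1" using assms(6) by (auto simp: K_def)
  have "\<forall>w0\<in>K. \<exists>r>0. eventually (\<lambda>s. \<forall>w\<in>K \<inter> ball w0 r. C1 (s *\<^sub>R w) \<le> C2 (s *\<^sub>R w)) (at_right 0)"
    using local_step[OF assms(1-5) Kp] by blast
  from bchoice[OF this] obtain r where r0:
    "\<forall>w0\<in>K. r w0 > 0 \<and> eventually (\<lambda>s. \<forall>w\<in>K \<inter> ball w0 (r w0). C1 (s *\<^sub>R w) \<le> C2 (s *\<^sub>R w)) (at_right 0)"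
    by blast
  have r: "\<And>w0. w0 \<in> K \<Longrightarrow> r w0 > 0"
    "\<And>w0. w0 \<in> K \<Longrightarrow> eventually (\<lambda>s. \<forall>w\<in>K \<inter> ball w0 (r w0). C1 (s *\<^sub>R w) \<le> C2 (s *\<^sub>R w)) (at_right 0)"
    using r0 by auto
  have "K \<subseteq> (\<Union>w0\<in>K. ball w0 (r w0))"
  proof
    fix w assume "w \<in> K" then show "w \<in> (\<Union>w0\<in>K. ball w0 (r w0))"
      using r(1)[of w] by (intro UN_I[of w]) auto
  qed
  then obtain D where D: "D \<subseteq> K" "finite D" "K \<subseteq> (\<Union>w0\<in>D. ball w0 (r w0))"
    using compactE_image[OF cK, of K "\<lambda>w0. ball w0 (r w0)"] by blast
  have "eventually (\<lambda>s. \<forall>w0\<in>D. \<forall>w\<in>K \<inter> ball w0 (r w0). C1 (s *\<^sub>R w) \<le> C2 (s *\<^sub>R w)) (at_right 0)"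
    using D by (intro eventually_ball_finite) (auto intro: r(2))
  then obtain b where b: "b > 0"
    "\<And>s. s > 0 \<Longrightarrow> s < b \<Longrightarrow> \<forall>w0\<in>D. \<forall>w\<in>K \<inter> ball w0 (r w0). C1 (s *\<^sub>R w) \<le> C2 (s *\<^sub>R w)"
    unfolding eventually_at_right_field by auto
  show ?thesis
  proof (intro exI[of _ b] conjI b(1) ballI)
    fix u assume u: "u \<in> S \<inter> ball 0 b \<inter> unit_cube"
    have "0 < u $ (SOME i. True)" using u assms(6) by (auto simp: pos_orthant_def)
    hence "u \<noteq> 0" by auto
    define s where "s = norm u"
    have s: "s > 0" "s < b" using u \<open>u \<noteq> 0\<close> by (auto simp: s_def)
    define w where "w = (1/s) *\<^sub>R u"
    have "w \<in> S" using assms(7) u s by (auto simp: w_def)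
    moreover have "norm w = 1" using s by (simp add: w_def s_def)
    ultimately have wK: "w \<in> K" by (auto simp: K_def)
    then obtain w0 where "w0 \<in> D" "w \<in> ball w0 (r w0)" using D by auto
    hence "C1 (s *\<^sub>R w) \<le> C2 (s *\<^sub>R w)" using b(2)[OF s] wK by blast
    moreover have "s *\<^sub>R w = u" using s by (simp add: w_def)
    ultimately show "C1 u \<le> C2 u" by simp
  qed
qed

end
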